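(* For all positive integers $n$ and $r$, \[ k(K_{rn}^{(r+1)};r)\leq k(n,r)\leq k(K_{rn}^{(r+1)};r)+5. \]
   Context: For a hypergraph $H=(V,E)$ (all hyperedges of size at least 2) and $r\in\mathbb N$, a colouring of the $r$-subsets of $V$ makes a hyperedge $e$ with $|e|\geq r+1$ monochromatic if all $r$-subsets of $e$ receive the same colour; $k(H;r)$ is the least $k$ for which there is a colouring of the $r$-subsets of $V$ with $k$ colours with no monochromatic hyperedge of size $\geq r+1$. $\chi(H)$ is the vertex chromatic number (least number of colours in a vertex colouring with no monochromatic hyperedge). $k(n,r)=\max\{k(H;r):\chi(H)=n\}$. $K_m^{(r+1)}$ is the complete $(r+1)$-uniform hypergraph on $m$ vertices. *)

theory Defs
  imports Main "HOL-Library.Extended_Nat"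
begin

definition hypergraph :: "'a set \<Rightarrow> 'a set set \<Rightarrow> bool" where
  "hypergraph V E \<longleftrightarrow> finite V \<and> (\<forall>e\<in>E. e \<subseteq> V \<and> card e \<ge> 2)"

definition proper_vertex_colouring :: "'a set \<Rightarrow> 'a set set \<Rightarrow> nat \<Rightarrow> ('a \<Rightarrow> nat) \<Rightarrow> bool" where
  "proper_vertex_colouring V E k c \<longleftrightarrow>
     (\<forall>v\<in>V. c v < k) \<and> (\<forall>e\<in>E. \<not> (\<forall>u\<in>e. \<forall>w\<in>e. c u = c w))"

definition chromatic_number :: "'a set \<Rightarrow> 'a set set \<Rightarrow> nat" where
  "chromatic_number V E = (LEAST k. \<exists>c. proper_vertex_colouring V E k c)"

definition good_subset_colouring ::
  "'a set \<Rightarrow> 'a set set \<Rightarrow> nat \<Rightarrow> nat \<Rightarrow> ('a set \<Rightarrow> nat) \<Rightarrow> bool" where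
  "good_subset_colouring V E r k f \<longleftrightarrow>
     (\<forall>s. s \<subseteq> V \<and> card s = r \<longrightarrow> f s < k) \<and>
     (\<forall>e\<in>E. card e \<ge> r + 1 \<longrightarrow>
        \<not> (\<forall>s t. s \<subseteq> e \<and> card s = r \<and> t \<subseteq> e \<and> card t = r \<longrightarrow> f s = f t))"

definition k_H :: "'a set \<Rightarrow> 'a set set \<Rightarrow> nat \<Rightarrow> nat" where
  "k_H V E r = (LEAST k. \<exists>f. good_subset_colouring V E r k f)"

text \<open>k(n,r) = max { k(H;r) : chi(H) = n }, taken over all finite hypergraphs
  (every finite hypergraph is isomorphic to one with vertices in nat).
  The maximum is rendered as a supremum in enat (it is a maximum whenever finite).\<close>
definition k_nr :: "nat \<Rightarrow> nat \<Rightarrow> enat" where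
  "k_nr n r = Sup {enat (k_H V E r) | (V :: nat set) E.
                     hypergraph V E \<and> chromatic_number V E = n}"

definition complete_verts :: "nat \<Rightarrow> nat set" where
  "complete_verts m = {..<m}"

definition complete_edges :: "nat \<Rightarrow> nat \<Rightarrow> nat set set" where
  "complete_edges m s = {e. e \<subseteq> {..<m} \<and> card e = s}"

end

theory Submission
  imports Defs
begin

lemma extend_subset:
  assumes "A \<subseteq> B" "finite B" "card A \<le> m" "m \<le> card B"
  shows "\<exists>C. A \<subseteq> C \<and> C \<subseteq> B \<and> card C = m"
proof -
  have fA: "finite A" using assms finite_subset by blast
  have "card (B - A) = card B - card A" using assms fA card_Diff_subset by blast
  then have "m - card A \<le> card (B - A)" using assms by simp
  then obtain D where D: "D \<subseteq> B - A" "card D = m - card A" "finite D"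
    by (meson obtain_subset_with_card_n)
  have "card (A \<union> D) = card A + card D"
    using D fA by (subst card_Un_disjoint) auto
  then show ?thesis using D assms by (intro exI[of _ "A \<union> D"]) auto
qed

lemma pullback:
  assumes "finite e" "Y \<subseteq> c ` e"
  shows "inv_into e c ` Y \<subseteq> e \<and> c ` (inv_into e c ` Y) = Y \<and> inj_on c (inv_into e c ` Y)
         \<and> card (inv_into e c ` Y) = card Y"
proof -
  have 1: "inv_into e c ` Y \<subseteq> e" using assms by (auto intro: inv_into_into)
  have 2: "c ` (inv_into e c ` Y) = Y" using assms
    by (force simp: image_image f_inv_into_f)
  have 3: "card (inv_into e c ` Y) = card Y"
    using assms inj_on_inv_into card_image by blast
  have fY: "finite (inv_into e c ` Y)" using 1 assms finite_subset by blast
  have 4: "inj_on c (inv_into e c ` Y)" using 2 3 fY eq_card_imp_inj_on by metis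
  show ?thesis using 1 2 3 4 by blast
qed

definition beta :: "(nat \<Rightarrow> nat) \<Rightarrow> nat set \<Rightarrow> nat" where
  "beta c s = (LEAST j. 2 \<le> card {v\<in>s. c v = j})"
definition pp :: "(nat \<Rightarrow> nat) \<Rightarrow> nat set \<Rightarrow> nat" where
  "pp c s = card {v\<in>s. c v < beta c s}"
definition qq :: "(nat \<Rightarrow> nat) \<Rightarrow> nat set \<Rightarrow> nat" where
  "qq c s = card {v\<in>s. c v = beta c s}"
definition gg :: "(nat \<Rightarrow> nat) \<Rightarrow> nat set \<Rightarrow> nat" where
  "gg c s = (if pp c s = 0 then qq c s mod 2 else 2 + pp c s mod 2)"

lemma gg_less: "gg c s < 4"
  unfolding gg_def by auto

lemma beta_eq:
  assumes "finite e" "s \<subseteq> e" "2 \<le> card {v\<in>s. c v = b}"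
    "\<forall>j<b. card {v\<in>e. c v = j} \<le> 1"
  shows "beta c s = b"
  unfolding beta_def
proof (rule Least_equality)
  show "2 \<le> card {v\<in>s. c v = b}" by fact
  fix y assume y: "2 \<le> card {v\<in>s. c v = y}"
  show "b \<le> y"
  proof (rule ccontr)
    assume "\<not> b \<le> y"
    then have "card {v\<in>e. c v = y} \<le> 1" using assms by auto
    moreover have "card {v\<in>s. c v = y} \<le> card {v\<in>e. c v = y}"
      using assms by (intro card_mono) auto
    ultimately show False using y by simp
  qed
qed

lemma noninj_two:
  assumes "\<not> inj_on c s" "finite s"
  shows "\<exists>j. 2 \<le> card {v\<in>s. c v = j}"
proof -
  obtain u w where uw: "u \<in> s" "w \<in> s" "u \<noteq> w" "c u = c w"
    using assms unfolding inj_on_def by blast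
  have "{u, w} \<subseteq> {v\<in>s. c v = c u}" using uw by auto
  then have "card {u,w} \<le> card {v\<in>s. c v = c u}" using assms by (intro card_mono) auto
  then have "2 \<le> card {v\<in>s. c v = c u}" using uw by simp
  then show ?thesis by blast
qed

lemma par: "(m::nat) mod 2 \<noteq> Suc m mod 2" by presburger

lemma core:
  assumes fe: "finite e" and ce: "r + 1 \<le> card e" and c2: "2 \<le> card (c ` e)"
    and cr: "card (c ` e) + 1 \<le> r"
  shows "\<exists>s1 s2. s1 \<subseteq> e \<and> card s1 = r \<and> s2 \<subseteq> e \<and> card s2 = r \<and> gg c s1 \<noteq> gg c s2"
proof -
  have "card (c ` e) < card e" using ce cr by simp
  then have "\<not> inj_on c e" using card_image by force
  then obtain j0 where j0: "2 \<le> card {v\<in>e. c v = j0}" using noninj_two fe by blast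
  define b where "b = beta c e"
  have bQ: "2 \<le> card {v\<in>e. c v = b}" unfolding b_def beta_def by (rule LeastI[of _ j0]) (rule j0)
  have small: "\<forall>j<b. card {v\<in>e. c v = j} \<le> 1"
  proof (intro allI impI)
    fix j assume "j < b"
    then have "\<not> 2 \<le> card {v\<in>e. c v = j}" unfolding b_def beta_def by (rule not_less_Least)
    then show "card {v\<in>e. c v = j} \<le> 1" by simp
  qed
  define P where "P = {v\<in>e. c v < b}"
  define Q where "Q = {v\<in>e. c v = b}"
  define R where "R = {v\<in>e. c v > b}"
  have fP: "finite P" and fQ: "finite Q" and fR: "finite R"
    unfolding P_def Q_def R_def using fe by auto
  have ePQR: "e = P \<union> Q \<union> R" unfolding P_def Q_def R_def by auto
  have part: "card e = card P + card Q + card R"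
  proof -
    have "card (P \<union> Q \<union> R) = card (P \<union> Q) + card R"
      using fP fQ fR by (intro card_Un_disjoint) (auto simp: P_def Q_def R_def)
    also have "card (P \<union> Q) = card P + card Q"
      using fP fQ by (intro card_Un_disjoint) (auto simp: P_def Q_def R_def)
    finally show ?thesis using ePQR by simp
  qed
  have Q2: "2 \<le> card Q" using bQ Q_def by simp
  have injP: "inj_on c P"
  proof (rule inj_onI)
    fix u w assume uw: "u \<in> P" "w \<in> P" "c u = c w"
    then have "card {v\<in>e. c v = c u} \<le> Suc 0" using small unfolding P_def by auto
    moreover have "u \<in> {v\<in>e. c v = c u}" "w \<in> {v\<in>e. c v = c u}" using uw unfolding P_def by auto
    ultimately show "u = w" using fe card_le_Suc0_iff_eq[of "{v\<in>e. c v = c u}"] by auto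
  qed
  have "Q \<noteq> {}" using Q2 by auto
  then have bin: "b \<in> c ` e" unfolding Q_def by auto
  have pr: "card P + 2 \<le> r"
  proof -
    have "insert b (c ` P) \<subseteq> c ` e" using bin unfolding P_def by auto
    then have "card (insert b (c ` P)) \<le> card (c ` e)" using fe by (intro card_mono) auto
    moreover have "b \<notin> c ` P" unfolding P_def by auto
    ultimately have "card (c ` P) + 1 \<le> card (c ` e)" using fP by simp
    then show ?thesis using card_image[OF injP] cr by simp
  qed
  have Rne: "P = {} \<Longrightarrow> R \<noteq> {}"
  proof
    assume "P = {}" "R = {}"
    then have "c ` e \<subseteq> {b}" using ePQR unfolding Q_def by auto
    then have "card (c ` e) \<le> card {b}" by (intro card_mono) auto
    then have "card (c ` e) \<le> 1" by simp
    then show False using c2 by simp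
  qed
  have gen: "beta c s = b \<and> pp c s = card (s \<inter> P) \<and> qq c s = card (s \<inter> Q)"
    if "s \<subseteq> e" "2 \<le> card (s \<inter> Q)" for s
  proof -
    have fs: "finite s" using that fe finite_subset by blast
    have "s \<inter> Q = {v\<in>s. c v = b}" using that unfolding Q_def by auto
    then have be: "beta c s = b" using beta_eq[OF fe that(1) _ small] that by simp
    have "{v\<in>s. c v < b} = s \<inter> P" "{v\<in>s. c v = b} = s \<inter> Q"
      using that unfolding P_def Q_def by auto
    then show ?thesis using be unfolding pp_def qq_def by simp
  qed
  show ?thesis
  proof (cases "P = {}")
    case False
    then obtain x where x: "x \<in> P" by blast
    obtain Q2s where Q2s: "Q2s \<subseteq> Q" "card Q2s = 2" "finite Q2s"
      using Q2 obtain_subset_with_card_n by metis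
    have xe: "x \<in> e" using x P_def by auto
    have dj: "P \<inter> Q2s = {}" using Q2s unfolding P_def Q_def by auto
    have cA1: "card ((P - {x}) \<union> Q2s) = card P - 1 + 2"
      using dj Q2s fP x by (subst card_Un_disjoint) auto
    have cA2: "card (P \<union> Q2s) = card P + 2"
      using dj Q2s fP by (subst card_Un_disjoint) auto
    have cB1: "card (e - {x}) = card e - 1" using xe fe by simp
    have sub1: "(P - {x}) \<union> Q2s \<subseteq> e - {x}" using Q2s x unfolding P_def Q_def by auto
    have sub2: "P \<union> Q2s \<subseteq> e" using Q2s unfolding P_def Q_def by auto
    have "card P \<noteq> 0" using x fP by auto
    then have cP: "card P \<ge> 1" by simp
    have le1: "card ((P - {x}) \<union> Q2s) \<le> r" "r \<le> card (e - {x})"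
      using cA1 cB1 ce pr cP by linarith+
    have le2: "card (P \<union> Q2s) \<le> r" "r \<le> card e" using cA2 ce pr by linarith+
    obtain s1 where s1: "(P - {x}) \<union> Q2s \<subseteq> s1" "s1 \<subseteq> e - {x}" "card s1 = r"
      using extend_subset[OF sub1 _ le1] fe by blast
    obtain s2 where s2: "P \<union> Q2s \<subseteq> s2" "s2 \<subseteq> e" "card s2 = r"
      using extend_subset[OF sub2 fe le2] by blast
    have "Q2s \<subseteq> s1 \<inter> Q" using s1 Q2s by auto
    then have "card Q2s \<le> card (s1 \<inter> Q)" using fQ by (intro card_mono) auto
    then have "2 \<le> card (s1 \<inter> Q)" using Q2s by simp
    then have g1: "pp c s1 = card (s1 \<inter> P)" using gen s1 by blast
    have "s1 \<inter> P = P - {x}" using s1 by blast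
    then have p1: "pp c s1 = card P - 1" using g1 x fP by simp
    have "Q2s \<subseteq> s2 \<inter> Q" using s2 Q2s by auto
    then have "card Q2s \<le> card (s2 \<inter> Q)" using fQ by (intro card_mono) auto
    then have "2 \<le> card (s2 \<inter> Q)" using Q2s by simp
    then have g2: "pp c s2 = card (s2 \<inter> P)" using gen s2 by blast
    have "s2 \<inter> P = P" using s2 by auto
    then have p2: "pp c s2 = card P" using g2 by simp
    have "gg c s1 \<noteq> gg c s2"
    proof (cases "card P = 1")
      case True
      then show ?thesis unfolding gg_def p1 p2 by simp
    next
      case False
      then have "card P - 1 \<noteq> 0" using cP by simp
      moreover have "(card P - 1) mod 2 \<noteq> Suc (card P - 1) mod 2" by (rule par)
      moreover have "Suc (card P - 1) = card P" using cP by simp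
      ultimately show ?thesis unfolding gg_def p1 p2 using cP by simp
    qed
    then show ?thesis using s1 s2 by blast
  next
    case True
    then have Rn: "R \<noteq> {}" using Rne by simp
    have "card R \<noteq> 0" using Rn fR by auto
    then have cR: "card R \<ge> 1" by simp
    have ceQR: "card e = card Q + card R" using part True by simp
    have dQR: "\<And>X. X \<subseteq> Q \<Longrightarrow> X \<inter> R = {}" unfolding Q_def R_def by auto
    have extQ: "\<exists>s. s \<subseteq> e \<and> card s = r \<and> s \<inter> Q = X"
      if XQ: "X \<subseteq> Q" and XR: "card X \<le> r" "r \<le> card X + card R" for X
    proof -
      have fX: "finite X" using that fQ finite_subset by blast
      have "card (X \<union> R) = card X + card R"
        using fX fR dQR[OF that(1)] by (intro card_Un_disjoint) auto
      then obtain s where s: "X \<subseteq> s" "s \<subseteq> X \<union> R" "card s = r"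
        using extend_subset[of X "X \<union> R" r] XR fX fR by auto
      have "s \<inter> Q = X" using s that(1) unfolding Q_def R_def by auto
      moreover have "s \<subseteq> e" using s that(1) ePQR by auto
      ultimately show ?thesis using s by blast
    qed
    show ?thesis
    proof (cases "r \<le> card R + 1")
      case True
      have "1 \<le> card Q" using Q2 by simp
      then obtain X1 where X1: "X1 \<subseteq> Q" "card X1 = 1" by (rule obtain_subset_with_card_n)
      obtain X2 where X2: "X2 \<subseteq> Q" "card X2 = 2" using Q2 by (rule obtain_subset_with_card_n)
      have "card X1 \<le> r" "r \<le> card X1 + card R" using X1 True pr by simp_all
      then obtain sa where sa: "sa \<subseteq> e" "card sa = r" "sa \<inter> Q = X1"
        using extQ[OF X1(1)] by blast
      have "card X2 \<le> r" "r \<le> card X2 + card R" using X2 True pr by simp_all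
      then obtain sb where sb: "sb \<subseteq> e" "card sb = r" "sb \<inter> Q = X2"
        using extQ[OF X2(1)] by blast
      have "beta c sb = b \<and> pp c sb = card (sb \<inter> P) \<and> qq c sb = card (sb \<inter> Q)"
        using gen sb X2 by simp
      then have gb: "gg c sb = 0" unfolding gg_def using True sb X2 \<open>P = {}\<close> by simp
      have fsa: "finite sa" using sa fe finite_subset by blast
      have "card (c ` sa) \<le> card (c ` e)" using sa fe by (intro card_mono) auto
      then have "card (c ` sa) < card sa" using sa cr by simp
      then have "\<not> inj_on c sa" using card_image by force
      then obtain j1 where j1: "2 \<le> card {v\<in>sa. c v = j1}" using noninj_two fsa by blast
      define b' where "b' = beta c sa"
      have b'Q: "2 \<le> card {v\<in>sa. c v = b'}" unfolding b'_def beta_def by (rule LeastI[of _ j1]) (rule j1)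
      then have "{v\<in>sa. c v = b'} \<noteq> {}" by (metis card.empty not_numeral_le_zero)
      then obtain y where y: "y \<in> sa" "c y = b'" by auto
      have "b' \<ge> b" using y sa \<open>P = {}\<close> unfolding P_def by auto
      moreover have "b' \<noteq> b"
      proof
        assume "b' = b"
        then have "{v\<in>sa. c v = b'} = X1" using sa unfolding Q_def by auto
        then show False using b'Q X1 by simp
      qed
      ultimately have bb: "b < b'" by simp
      have "X1 \<noteq> {}" using X1 by auto
      then obtain u where u: "u \<in> X1" by auto
      have "u \<in> {v\<in>sa. c v < b'}" using u sa X1 bb unfolding Q_def by auto
      then have "pp c sa \<noteq> 0" unfolding pp_def b'_def using fsa by auto
      then have "gg c sa \<ge> 2" unfolding gg_def by simp
      then show ?thesis using gb sa sb by (intro exI[of _ sa] exI[of _ sb]) auto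
    next
      case False
      define j where "j = r - card R"
      have j2: "2 \<le> j" and jq: "j + 1 \<le> card Q" and jr: "j + 1 \<le> r"
        using False ce ceQR cR unfolding j_def by linarith+
      have "j \<le> card Q" using jq by simp
      then obtain X1 where X1: "X1 \<subseteq> Q" "card X1 = j" by (rule obtain_subset_with_card_n)
      obtain X2 where X2: "X2 \<subseteq> Q" "card X2 = j + 1" using jq by (rule obtain_subset_with_card_n)
      have "card X1 \<le> r" "r \<le> card X1 + card R" using X1 jr j_def False by simp_all
      then obtain sa where sa: "sa \<subseteq> e" "card sa = r" "sa \<inter> Q = X1"
        using extQ[OF X1(1)] by blast
      have "card X2 \<le> r" "r \<le> card X2 + card R" using X2 jr j_def False by simp_all
      then obtain sb where sb: "sb \<subseteq> e" "card sb = r" "sb \<inter> Q = X2"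
        using extQ[OF X2(1)] by blast
      have "beta c sb = b \<and> pp c sb = card (sb \<inter> P) \<and> qq c sb = card (sb \<inter> Q)"
        using gen sb X2 j2 by simp
      then have gb: "gg c sb = (j + 1) mod 2" unfolding gg_def using sb X2 \<open>P = {}\<close> by simp
      have "beta c sa = b \<and> pp c sa = card (sa \<inter> P) \<and> qq c sa = card (sa \<inter> Q)"
        using gen sa X1 j2 by simp
      then have ga: "gg c sa = j mod 2" unfolding gg_def using sa X1 \<open>P = {}\<close> by simp
      have "gg c sa \<noteq> gg c sb" using ga gb par[of j] by simp
      then show ?thesis using sa sb by blast
    qed
  qed
qed

lemma good_exists:
  assumes "finite V" "\<forall>e\<in>E. e \<subseteq> V" "r \<ge> 1"
  shows "\<exists>k f. good_subset_colouring V E r k f"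
proof -
  have "finite {s. s \<subseteq> V \<and> card s = r}" using assms by simp
  from finite_imp_inj_to_nat_seg[OF this] obtain \<phi> and M :: nat where
    \<phi>0: "\<phi> ` {s. s \<subseteq> V \<and> card s = r} = {i. i < M} \<and> inj_on \<phi> {s. s \<subseteq> V \<and> card s = r}"
    by (elim exE)
  note \<phi> = conjunct1[OF \<phi>0] conjunct2[OF \<phi>0]
  have "good_subset_colouring V E r M \<phi>"
    unfolding good_subset_colouring_def
  proof (intro conjI allI impI ballI notI)
    fix s assume "s \<subseteq> V \<and> card s = r"
    then have "s \<in> {s. s \<subseteq> V \<and> card s = r}" by simp
    then have "\<phi> s \<in> \<phi> ` {s. s \<subseteq> V \<and> card s = r}" by (rule imageI)
    then show "\<phi> s < M" using \<phi>(1) by simp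
  next
    fix e assume e: "e \<in> E" "r + 1 \<le> card e"
      and all: "\<forall>s t. s \<subseteq> e \<and> card s = r \<and> t \<subseteq> e \<and> card t = r \<longrightarrow> \<phi> s = \<phi> t"
    obtain e' where e': "e' \<subseteq> e" "card e' = r + 1" "finite e'"
      by (rule obtain_subset_with_card_n[OF e(2)])
    have "e' \<noteq> {}" using e' by auto
    then obtain x where x: "x \<in> e'" by blast
    have "card (e' - {x}) = r" using e' x by simp
    then have "card (e' - {x}) \<noteq> 0" using assms(3) by simp
    then have "e' - {x} \<noteq> {}" by (metis card.empty)
    then obtain y where y: "y \<in> e' - {x}" by blast
    have xy: "x \<in> e'" "y \<in> e'" "x \<noteq> y" using x y by auto
    have cx: "card (e' - {x}) = r" "card (e' - {y}) = r" using e' xy by simp_all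
    have "e' - {x} \<noteq> e' - {y}" using xy by blast
    moreover have "e' - {x} \<subseteq> V" "e' - {y} \<subseteq> V" using e(1) e'(1) assms(2) by blast+
    ultimately have "\<phi> (e' - {x}) \<noteq> \<phi> (e' - {y})"
      using inj_onD[OF \<phi>(2), of "e' - {x}" "e' - {y}"] cx by auto
    moreover have "e' - {x} \<subseteq> e" "e' - {y} \<subseteq> e" using e'(1) by blast+
    then have "\<phi> (e' - {x}) = \<phi> (e' - {y})" using all cx by blast
    ultimately show False by blast
  qed
  then show ?thesis by blast
qed

lemma kH_attained:
  assumes "finite V" "\<forall>e\<in>E. e \<subseteq> V" "r \<ge> 1"
  shows "\<exists>f. good_subset_colouring V E r (k_H V E r) f"
proof -
  obtain k f where "good_subset_colouring V E r k f" using good_exists[OF assms] by blast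
  then have "\<exists>k f. good_subset_colouring V E r k f" by blast
  then show ?thesis unfolding k_H_def by (rule LeastI_ex)
qed

lemma chi_complete:
  assumes "r \<ge> 1"
  shows "chromatic_number (complete_verts (r * n)) (complete_edges (r * n) (r + 1)) = n"
  unfolding chromatic_number_def
proof (rule Least_equality)
  show "\<exists>c. proper_vertex_colouring (complete_verts (r * n)) (complete_edges (r * n) (r + 1)) n c"
  proof (intro exI)
    show "proper_vertex_colouring (complete_verts (r * n)) (complete_edges (r * n) (r + 1)) n (\<lambda>v. v div r)"
      unfolding proper_vertex_colouring_def complete_verts_def complete_edges_def
    proof (intro conjI ballI notI)
      fix v assume "v \<in> {..<r * n}"
      then have "v < n * r" by (simp add: mult.commute)
      then show "v div r < n" by (rule less_mult_imp_div_less)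
    next
      fix e assume e: "e \<in> {e. e \<subseteq> {..<r * n} \<and> card e = r + 1}"
        and mono: "\<forall>u\<in>e. \<forall>w\<in>e. u div r = w div r"
      have "card e = r + 1" using e by blast
      then have "e \<noteq> {}" by (metis card.empty add_is_0 one_neq_zero)
      then obtain u where u: "u \<in> e" by blast
      have "e \<subseteq> {u div r * r ..< u div r * r + r}"
      proof
        fix w assume "w \<in> e"
        then have "w div r = u div r" using mono u by blast
        then have "u div r * r + w mod r = w" using div_mult_mod_eq[of w r] by simp
        moreover have "w mod r < r" using assms by simp
        ultimately have "u div r * r \<le> w" "w < u div r * r + r" by linarith+
        then show "w \<in> {u div r * r ..< u div r * r + r}" by (simp only: atLeastLessThan_iff)
      qed
      then have "card e \<le> card {u div r * r ..< u div r * r + r}" by (intro card_mono) (rule finite_atLeastLessThan)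
      then have "card e \<le> r" by simp
      then show False using \<open>card e = r + 1\<close> by simp
    qed
  qed
next
  fix k assume "\<exists>c. proper_vertex_colouring (complete_verts (r * n)) (complete_edges (r * n) (r + 1)) k c"
  then obtain c where c: "\<forall>v\<in>{..<r*n}. c v < k"
    "\<forall>e\<in>complete_edges (r * n) (r + 1). \<not> (\<forall>u\<in>e. \<forall>w\<in>e. c u = c w)"
    unfolding proper_vertex_colouring_def complete_verts_def by blast
  show "n \<le> k"
  proof (rule ccontr)
    assume "\<not> n \<le> k"
    then have kn: "k < n" by simp
    define C where "C j = {v\<in>{..<r*n}. c v = j}" for j
    have "{..<r*n} = (\<Union>j\<in>{..<k}. C j)" using c(1) unfolding C_def by auto
    then have "card {..<r*n} \<le> (\<Sum>j<k. card (C j))" using card_UN_le[of "{..<k}" C] by simp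
    then have "r * n \<le> (\<Sum>j<k. card (C j))" by simp
    moreover have "\<exists>j<k. r + 1 \<le> card (C j)"
    proof (rule ccontr)
      assume "\<not> ?thesis"
      then have "\<forall>j<k. card (C j) \<le> r" by auto
      then have "(\<Sum>j<k. card (C j)) \<le> (\<Sum>j<k. r)" by (intro sum_mono) auto
      also have "\<dots> = k * r" by simp
      finally have "(\<Sum>j<k. card (C j)) \<le> k * r" .
      moreover have "k * r < n * r" using kn assms by simp
      moreover have "r * n = n * r" by (rule mult.commute)
      ultimately show False using \<open>r * n \<le> _\<close> by linarith
    qed
    then obtain j where j: "r + 1 \<le> card (C j)" by blast
    then obtain e where e: "e \<subseteq> C j" "card e = r + 1" by (meson obtain_subset_with_card_n)
    have "e \<in> complete_edges (r * n) (r + 1)" using e unfolding complete_edges_def C_def by auto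
    moreover have "\<forall>u\<in>e. \<forall>w\<in>e. c u = c w" using e unfolding C_def by auto
    ultimately show False using c(2) by blast
  qed
qed

lemma noninj_card:
  assumes "finite s" "card (c ` s) < card s"
  shows "\<not> inj_on c s"
  using assms card_image by fastforce

lemma upper:
  fixes V :: "nat set"
  assumes hyp: "hypergraph V E" and chi: "chromatic_number V E = n" and r1: "r \<ge> 1"
  shows "k_H V E r \<le> k_H (complete_verts (r * n)) (complete_edges (r * n) (r + 1)) r + 4"
proof -
  define K where "K = k_H (complete_verts (r * n)) (complete_edges (r * n) (r + 1)) r"
  have sub: "\<forall>e\<in>complete_edges (r * n) (r + 1). e \<subseteq> complete_verts (r * n)"
    unfolding complete_edges_def complete_verts_def by blast
  have fin: "finite (complete_verts (r * n))" unfolding complete_verts_def by simp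
  obtain f where f: "good_subset_colouring (complete_verts (r * n)) (complete_edges (r * n) (r + 1)) r K f"
    using kH_attained[OF fin sub r1] unfolding K_def by blast
  have f1: "\<forall>s. s \<subseteq> complete_verts (r * n) \<and> card s = r \<longrightarrow> f s < K"
    and f2: "\<forall>e\<in>complete_edges (r * n) (r + 1). card e \<ge> r + 1 \<longrightarrow>
        \<not> (\<forall>s t. s \<subseteq> e \<and> card s = r \<and> t \<subseteq> e \<and> card t = r \<longrightarrow> f s = f t)"
    using f unfolding good_subset_colouring_def by (rule conjunct1, rule conjunct2)
  have fK: "\<And>s. s \<subseteq> {..<r*n} \<Longrightarrow> card s = r \<Longrightarrow> f s < K"
    using f1 unfolding complete_verts_def by blast
  have fE: "\<And>Y. Y \<subseteq> {..<r*n} \<Longrightarrow> card Y = r + 1 \<Longrightarrow>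
      \<exists>S T. S \<subseteq> Y \<and> card S = r \<and> T \<subseteq> Y \<and> card T = r \<and> f S \<noteq> f T"
  proof -
    fix Y assume Y: "Y \<subseteq> {..<r*n}" "card Y = r + 1"
    then have "Y \<in> complete_edges (r * n) (r + 1)" unfolding complete_edges_def by blast
    then have "\<not> (\<forall>s t. s \<subseteq> Y \<and> card s = r \<and> t \<subseteq> Y \<and> card t = r \<longrightarrow> f s = f t)"
      using f2 Y(2) by simp
    then show "\<exists>S T. S \<subseteq> Y \<and> card S = r \<and> T \<subseteq> Y \<and> card T = r \<and> f S \<noteq> f T"
      by blast
  qed
  have finV: "finite V" and Esub: "\<forall>e\<in>E. e \<subseteq> V \<and> card e \<ge> 2"
    using hyp unfolding hypergraph_def by auto
  from finite_imp_inj_to_nat_seg[OF finV] obtain \<phi> and M :: nat where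
    \<phi>0: "\<phi> ` V = {i. i < M} \<and> inj_on \<phi> V" by (elim exE)
  have "proper_vertex_colouring V E M \<phi>"
    unfolding proper_vertex_colouring_def
  proof (intro conjI ballI notI)
    fix v assume "v \<in> V"
    then have "\<phi> v \<in> \<phi> ` V" by (rule imageI)
    then show "\<phi> v < M" using conjunct1[OF \<phi>0] by simp
  next
    fix e assume e: "e \<in> E" and all: "\<forall>u\<in>e. \<forall>w\<in>e. \<phi> u = \<phi> w"
    have fe: "finite e" using e Esub finV finite_subset by blast
    have "\<not> card e \<le> Suc 0" using e Esub by auto
    then obtain u w where uw: "u \<in> e" "w \<in> e" "u \<noteq> w" using card_le_Suc0_iff_eq[OF fe] by blast
    moreover have "u \<in> V" "w \<in> V" using uw e Esub by blast+
    ultimately have "\<phi> u \<noteq> \<phi> w" using inj_onD[OF conjunct2[OF \<phi>0]] by blast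
    then show False using all uw by blast
  qed
  then have "\<exists>k c. proper_vertex_colouring V E k c" by blast
  then have "\<exists>c. proper_vertex_colouring V E (chromatic_number V E) c"
    unfolding chromatic_number_def by (rule LeastI_ex)
  then obtain c where c: "proper_vertex_colouring V E n c" using chi by auto
  have cV: "\<And>v. v \<in> V \<Longrightarrow> c v < n" and cE: "\<And>e. e \<in> E \<Longrightarrow> \<not> (\<forall>u\<in>e. \<forall>w\<in>e. c u = c w)"
    using c unfolding proper_vertex_colouring_def by auto
  have crn: "\<And>s. s \<subseteq> V \<Longrightarrow> c ` s \<subseteq> {..<r*n}"
  proof
    fix s x assume "s \<subseteq> V" "x \<in> c ` s"
    then obtain v where "v \<in> V" "x = c v" by blast
    then have "x < n" using cV by blast
    moreover have "n \<le> r * n" using mult_le_mono1[OF r1, of n] by simp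
    ultimately have "x < r * n" by (rule less_le_trans)
    then show "x \<in> {..<r*n}" by simp
  qed
  define F where "F s = (if inj_on c s then f (c ` s) else K + gg c s)" for s
  have Finj: "\<And>s. s \<subseteq> V \<Longrightarrow> card s = r \<Longrightarrow> inj_on c s \<Longrightarrow> F s < K"
  proof -
    fix s assume s: "s \<subseteq> V" "card s = r" "inj_on c s"
    then have "card (c ` s) = r" using card_image[OF s(3)] s(2) by simp
    then have "f (c ` s) < K" using fK crn s(1) by blast
    then show "F s < K" unfolding F_def using s by simp
  qed
  have Fbound: "\<And>s. s \<subseteq> V \<Longrightarrow> card s = r \<Longrightarrow> F s < K + 4"
  proof -
    fix s assume s: "s \<subseteq> V" "card s = r"
    show "F s < K + 4"
    proof (cases "inj_on c s")
      case True then have "F s < K" using Finj[OF s True] by simp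
      then show ?thesis by simp
    next
      case False then show ?thesis unfolding F_def using gg_less[of c s] by simp
    qed
  qed
  have diff: "\<exists>S T. S \<subseteq> e \<and> card S = r \<and> T \<subseteq> e \<and> card T = r \<and> F S \<noteq> F T"
    if e: "e \<in> E" "r + 1 \<le> card e" for e
  proof -
    have eV: "e \<subseteq> V" using e Esub by blast
    have fe: "finite e" using eV finV finite_subset by blast
    have c2: "2 \<le> card (c ` e)"
    proof (rule ccontr)
      assume "\<not> 2 \<le> card (c ` e)"
      then have "card (c ` e) \<le> Suc 0" by simp
      then have ab: "\<forall>a\<in>c ` e. \<forall>b\<in>c ` e. a = b"
        by (rule iffD1[OF card_le_Suc0_iff_eq[OF finite_imageI[OF fe]]])
      have "\<forall>u\<in>e. \<forall>w\<in>e. c u = c w"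
      proof (intro ballI)
        fix u w assume "u \<in> e" "w \<in> e"
        then have cu: "c u \<in> c ` e" and cw: "c w \<in> c ` e" by simp_all
        show "c u = c w" using bspec[OF bspec[OF ab cu] cw] .
      qed
      then show False by (rule notE[OF cE[OF e(1)]])
    qed
    consider (big) "r + 1 \<le> card (c ` e)" | (eq) "card (c ` e) = r" | (small) "card (c ` e) + 1 \<le> r"
      by linarith
    then show ?thesis
    proof cases
      case big
      obtain Y where Y: "Y \<subseteq> c ` e" "card Y = r + 1" by (rule obtain_subset_with_card_n[OF big])
      have "Y \<subseteq> {..<r*n}" using Y(1) crn[OF eV] by (rule subset_trans)
      from fE[OF this Y(2)] obtain S T where
        ST: "S \<subseteq> Y" "card S = r" "T \<subseteq> Y" "card T = r" "f S \<noteq> f T"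
        by blast
      define S' where "S' = inv_into e c ` S"
      define T' where "T' = inv_into e c ` T"
      have pS: "S' \<subseteq> e \<and> c ` S' = S \<and> inj_on c S' \<and> card S' = card S"
        unfolding S'_def by (rule pullback[OF fe]) (rule subset_trans[OF ST(1) Y(1)])
      have pT: "T' \<subseteq> e \<and> c ` T' = T \<and> inj_on c T' \<and> card T' = card T"
        unfolding T'_def by (rule pullback[OF fe]) (rule subset_trans[OF ST(3) Y(1)])
      have "F S' = f S" "F T' = f T" unfolding F_def using pS pT by simp_all
      then have "F S' \<noteq> F T'" using ST(5) by simp
      moreover have "S' \<subseteq> e" "card S' = r" "T' \<subseteq> e" "card T' = r" using pS pT ST by simp_all
      ultimately show ?thesis by blast
    next
      case eq
      define X where "X = inv_into e c ` (c ` e)"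
      have pX: "X \<subseteq> e \<and> c ` X = c ` e \<and> inj_on c X \<and> card X = card (c ` e)"
        unfolding X_def by (rule pullback[OF fe]) simp
      have "card X < card e" using pX eq e(2) by simp
      then have "\<not> e \<subseteq> X" using fe pX by (meson card_mono finite_subset leD)
      then obtain z where z: "z \<in> e" "z \<notin> X" by blast
      have "c z \<in> c ` X" using pX z by blast
      then obtain x where x: "x \<in> X" "c x = c z" by auto
      have "x \<noteq> z" using x z by blast
      have fX: "finite X" using pX fe finite_subset by blast
      have "card (X - {x}) \<noteq> 0" using pX eq c2 x fX by simp
      then have "X - {x} \<noteq> {}" by (metis card.empty)
      then obtain w where w: "w \<in> X" "w \<noteq> x" by blast
      define s where "s = insert z (X - {w})"
      have s_sub: "s \<subseteq> e" using pX z w unfolding s_def by blast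
      have "card s = r" unfolding s_def using z w fX pX eq r1
        by (simp add: card_insert_if)
      moreover have "\<not> inj_on c s"
      proof
        assume "inj_on c s"
        moreover have "x \<in> s" "z \<in> s" using x w unfolding s_def by auto
        ultimately have "x = z" using x inj_onD by metis
        then show False using \<open>x \<noteq> z\<close> by simp
      qed
      ultimately have "F s \<ge> K" unfolding F_def by simp
      moreover have "F X < K"
      proof -
        have XV: "X \<subseteq> V" using pX eV by blast
        have "card X = r" using pX eq by simp
        then show ?thesis using Finj[OF XV] pX by blast
      qed
      ultimately have "F X \<noteq> F s" by simp
      moreover have "X \<subseteq> e" "card X = r" using pX eq by simp_all
      ultimately show ?thesis using s_sub \<open>card s = r\<close> by blast
    next
      case small
      obtain s1 s2 where s12: "s1 \<subseteq> e" "card s1 = r" "s2 \<subseteq> e" "card s2 = r" "gg c s1 \<noteq> gg c s2"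
        using core[OF fe e(2) c2 small] by blast
      have fs1: "finite s1" using s12(1) fe by (rule finite_subset)
      have fs2: "finite s2" using s12(3) fe by (rule finite_subset)
      have "card (c ` s1) \<le> card (c ` e)" using s12(1) fe by (intro card_mono) auto
      then have "card (c ` s1) < card s1" using s12(2) small by linarith
      then have n1: "\<not> inj_on c s1" by (rule noninj_card[OF fs1])
      have "card (c ` s2) \<le> card (c ` e)" using s12(3) fe by (intro card_mono) auto
      then have "card (c ` s2) < card s2" using s12(4) small by linarith
      then have n2: "\<not> inj_on c s2" by (rule noninj_card[OF fs2])
      note n1 n2
      then have "F s1 \<noteq> F s2" unfolding F_def using s12 by simp
      then show ?thesis using s12 by blast
    qed
  qed
  have "good_subset_colouring V E r (K + 4) F"
    unfolding good_subset_colouring_def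
  proof (intro conjI allI impI ballI notI)
    fix s assume "s \<subseteq> V \<and> card s = r" then show "F s < K + 4" using Fbound by (elim conjE)
  next
    fix e assume eE: "e \<in> E" "r + 1 \<le> card e"
      and all: "\<forall>s t. s \<subseteq> e \<and> card s = r \<and> t \<subseteq> e \<and> card t = r \<longrightarrow> F s = F t"
    from diff[OF eE] obtain S T where ST: "S \<subseteq> e" "card S = r" "T \<subseteq> e" "card T = r" "F S \<noteq> F T"
      by blast
    have "F S = F T" using all ST(1-4) by blast
    then show False using ST(5) by simp
  qed
  then have "\<exists>F. good_subset_colouring V E r (K + 4) F" by (rule exI[where x=F])
  then have "k_H V E r \<le> K + 4" unfolding k_H_def by (rule Least_le)
  then show ?thesis unfolding K_def .
qed

theorem theorem4p2:
  fixes n r :: nat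
  assumes "n \<ge> 1" and "r \<ge> 1"
  shows "enat (k_H (complete_verts (r * n)) (complete_edges (r * n) (r + 1)) r) \<le> k_nr n r
       \<and> k_nr n r \<le> enat (k_H (complete_verts (r * n)) (complete_edges (r * n) (r + 1)) r) + 5"
proof
  define K where "K = k_H (complete_verts (r * n)) (complete_edges (r * n) (r + 1)) r"
  have hyp: "hypergraph (complete_verts (r * n)) (complete_edges (r * n) (r + 1))"
    unfolding hypergraph_def complete_verts_def complete_edges_def using assms(2) by auto
  have "enat K \<in> {enat (k_H V E r) | (V :: nat set) E.
                     hypergraph V E \<and> chromatic_number V E = n}"
    unfolding K_def using hyp chi_complete[OF assms(2)] by blast
  then show "enat K \<le> k_nr n r" unfolding k_nr_def by (rule Sup_upper)
  show "k_nr n r \<le> enat K + 5"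
    unfolding k_nr_def
  proof (rule Sup_least)
    fix x assume "x \<in> {enat (k_H V E r) | (V :: nat set) E.
                     hypergraph V E \<and> chromatic_number V E = n}"
    then obtain V :: "nat set" and E where VE: "x = enat (k_H V E r)" "hypergraph V E" "chromatic_number V E = n"
      by blast
    have "k_H V E r \<le> K + 4" unfolding K_def using upper[OF VE(2,3) assms(2)] .
    then have "k_H V E r \<le> K + 5" by simp
    then have "enat (k_H V E r) \<le> enat (K + 5)" by simp
    also have "enat (K + 5) = enat K + 5" by (simp add: numeral_eq_enat)
    finally show "x \<le> enat K + 5" using VE(1) by simp
  qed
qed

end
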